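(* Let $\mathcal{AF}_{\vdash}=(\vdash,\overline{\cdot},\widehat{\cdot})$ be a pointed setting. Then $\mathcal{AF}_{\vdash}$ satisfies Cumulativity and Extensional Cumulativity for grounded semantics: for all $\mathcal{S}\cup\{\phi,\psi\}\subseteq\mathcal{L}$ with $\mathcal{S}\mathrel{\mid\!\sim}_{\mathsf{Grd}}\phi$, (i) $\mathcal{S}\mathrel{\mid\!\sim}^{+\phi}_{\mathsf{Grd}}\psi$ iff $\mathcal{S}\mathrel{\mid\!\sim}_{\mathsf{Grd}}\psi$, and (ii) $\mathsf{Grd}(\mathcal{AF}_{\vdash}(\mathcal{S}))=\mathsf{Grd}(\mathcal{AF}_{\vdash^{+\phi}}(\mathcal{S}))\cap\mathit{Arg}_{\vdash}(\mathcal{S})$.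
   Context: $\mathcal{L}$ is a set of formulas, $\wp_{\sf fin}(X)$ the finite subsets of $X$. A setting is $(\vdash,\overline{\cdot},\widehat{\cdot})$ with ${\vdash}\subseteq\wp_{\sf fin}(\mathcal{L})\times\mathcal{L}$ arbitrary, $\overline{\cdot}:\mathcal{L}\to\wp(\mathcal{L})$, $\widehat{\cdot}$ assigning to each nonempty finite set of formulas a finite set of formulas, with $\widehat{\emptyset}=\emptyset$. $\mathit{Arg}_{\vdash}(\mathcal{S})=\{(\Gamma,\gamma):\Gamma\subseteq\mathcal{S}\text{ finite},\Gamma\vdash\gamma\}$; in $\mathcal{AF}_{\vdash}(\mathcal{S})$, $(\Gamma,\gamma)$ attacks $(\Gamma',\gamma')$ iff $\gamma\in\overline{\phi}$ for some $\phi\in\widehat{\Gamma'}$. A set of arguments is complete iff it is conflict-free, defends each member (every attacker of a member is attacked by a member) and contains every argument it defends; $\mathsf{Grd}(\mathcal{AF}_{\vdash}(\mathcal{S}))$ is the $\subseteq$-minimal complete set. $\mathcal{S}\mathrel{\mid\!\sim}_{\mathsf{Grd}}\phi$ iff the grounded extension of $\mathcal{AF}_{\vdash}(\mathcal{S})$ contains an argument with conclusion $\phi$. For $\phi\in\mathcal{L}$, $\vdash^{+\phi}$ is the transitive closure of ${\vdash}\cup\{(\emptyset,\phi)\}$, and $\mathrel{\mid\!\sim}^{+\phi}_{\mathsf{Grd}}$ is the grounded consequence relation of the setting $(\vdash^{+\phi},\overline{\cdot},\widehat{\cdot})$. The setting is pointed iff (1) $\widehat{\Gamma\cup\Delta}=\widehat{\Gamma}\cup\widehat{\Delta}$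 for all finite $\Gamma,\Delta$, and (2) $\vdash$ satisfies Cut: for every $\phi\in\mathcal{L}$ and all finite $\Gamma,\Delta$ and $\gamma$, if $\Gamma\vdash\phi$ and $\Delta\vdash^{+\phi}\gamma$ then $\Gamma\cup\Delta\vdash\gamma$. *)

theory Defs
  imports Main
begin

(* Formulas: type 'f.  A setting is (deriv, contr, hat) with
   deriv :: 'f set => 'f => bool  (only its restriction to finite premise sets matters),
   contr  = overline,  hat = the hat-operator. *)

definition setting :: "('f set \<Rightarrow> 'f \<Rightarrow> bool) \<Rightarrow> ('f \<Rightarrow> 'f set) \<Rightarrow> ('f set \<Rightarrow> 'f set) \<Rightarrow> bool" where
  "setting deriv contr hat \<longleftrightarrow>
     hat {} = {} \<and> (\<forall>\<Gamma>. finite \<Gamma> \<longrightarrow> finite (hat \<Gamma>))"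

(* Transitive closure of  deriv \<union> {(\<emptyset>, \<phi>)}  (restricted to finite premise sets),
   transitivity read as the cut rule:  \<Gamma> \<turnstile> \<psi>,  \<Delta> \<turnstile> \<gamma>,  \<psi> \<in> \<Delta>  give  \<Gamma> \<union> (\<Delta> - {\<psi>}) \<turnstile> \<gamma>. *)
inductive deriv_plus :: "('f set \<Rightarrow> 'f \<Rightarrow> bool) \<Rightarrow> 'f \<Rightarrow> 'f set \<Rightarrow> 'f \<Rightarrow> bool"
  for deriv :: "'f set \<Rightarrow> 'f \<Rightarrow> bool" and \<phi> :: 'f where
  base: "finite \<Gamma> \<Longrightarrow> deriv \<Gamma> \<gamma> \<Longrightarrow> deriv_plus deriv \<phi> \<Gamma> \<gamma>"
| ax: "deriv_plus deriv \<phi> {} \<phi>"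
| trans: "deriv_plus deriv \<phi> \<Gamma> \<psi> \<Longrightarrow> deriv_plus deriv \<phi> \<Delta> \<gamma> \<Longrightarrow> \<psi> \<in> \<Delta> \<Longrightarrow>
          deriv_plus deriv \<phi> (\<Gamma> \<union> (\<Delta> - {\<psi>})) \<gamma>"

definition pointed :: "('f set \<Rightarrow> 'f \<Rightarrow> bool) \<Rightarrow> ('f \<Rightarrow> 'f set) \<Rightarrow> ('f set \<Rightarrow> 'f set) \<Rightarrow> bool" where
  "pointed deriv contr hat \<longleftrightarrow>
     setting deriv contr hat \<and>
     (\<forall>\<Gamma> \<Delta>. finite \<Gamma> \<longrightarrow> finite \<Delta> \<longrightarrow> hat (\<Gamma> \<union> \<Delta>) = hat \<Gamma> \<union> hat \<Delta>) \<and>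
     (\<forall>\<phi> \<Gamma> \<Delta> \<gamma>. finite \<Gamma> \<longrightarrow> finite \<Delta> \<longrightarrow> deriv \<Gamma> \<phi> \<longrightarrow> deriv_plus deriv \<phi> \<Delta> \<gamma>
        \<longrightarrow> deriv (\<Gamma> \<union> \<Delta>) \<gamma>)"

definition Arg :: "('f set \<Rightarrow> 'f \<Rightarrow> bool) \<Rightarrow> 'f set \<Rightarrow> ('f set \<times> 'f) set" where
  "Arg deriv S = {(\<Gamma>, \<gamma>). finite \<Gamma> \<and> \<Gamma> \<subseteq> S \<and> deriv \<Gamma> \<gamma>}"

definition attacks :: "('f \<Rightarrow> 'f set) \<Rightarrow> ('f set \<Rightarrow> 'f set) \<Rightarrow> ('f set \<times> 'f) \<Rightarrow> ('f set \<times> 'f) \<Rightarrow> bool" where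
  "attacks contr hat a b \<longleftrightarrow> (\<exists>\<phi> \<in> hat (fst b). snd a \<in> contr \<phi>)"

definition conflict_free :: "('a \<Rightarrow> 'a \<Rightarrow> bool) \<Rightarrow> 'a set \<Rightarrow> bool" where
  "conflict_free Att E \<longleftrightarrow> (\<forall>a\<in>E. \<forall>b\<in>E. \<not> Att a b)"

definition defends :: "'a set \<Rightarrow> ('a \<Rightarrow> 'a \<Rightarrow> bool) \<Rightarrow> 'a set \<Rightarrow> 'a \<Rightarrow> bool" where
  "defends Args Att E a \<longleftrightarrow> (\<forall>b\<in>Args. Att b a \<longrightarrow> (\<exists>c\<in>E. Att c b))"

definition complete_ext :: "'a set \<Rightarrow> ('a \<Rightarrow> 'a \<Rightarrow> bool) \<Rightarrow> 'a set \<Rightarrow> bool" where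
  "complete_ext Args Att E \<longleftrightarrow>
     E \<subseteq> Args \<and> conflict_free Att E \<and> (\<forall>a\<in>E. defends Args Att E a) \<and>
     (\<forall>a\<in>Args. defends Args Att E a \<longrightarrow> a \<in> E)"

definition grounded :: "'a set \<Rightarrow> ('a \<Rightarrow> 'a \<Rightarrow> bool) \<Rightarrow> 'a set" where
  "grounded Args Att = (THE E. complete_ext Args Att E \<and>
      (\<forall>E'. complete_ext Args Att E' \<and> E' \<subseteq> E \<longrightarrow> E' = E))"

definition Grd :: "('f set \<Rightarrow> 'f \<Rightarrow> bool) \<Rightarrow> ('f \<Rightarrow> 'f set) \<Rightarrow> ('f set \<Rightarrow> 'f set) \<Rightarrow> 'f set \<Rightarrow> ('f set \<times> 'f) set" where
  "Grd deriv contr hat S = grounded (Arg deriv S) (attacks contr hat)"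

definition grd_cons :: "('f set \<Rightarrow> 'f \<Rightarrow> bool) \<Rightarrow> ('f \<Rightarrow> 'f set) \<Rightarrow> ('f set \<Rightarrow> 'f set) \<Rightarrow> 'f set \<Rightarrow> 'f \<Rightarrow> bool" where
  "grd_cons deriv contr hat S \<phi> \<longleftrightarrow> (\<exists>\<Gamma>. (\<Gamma>, \<phi>) \<in> Grd deriv contr hat S)"

end

theory Submission
  imports Defs
begin

definition charF :: "'a set \<Rightarrow> ('a \<Rightarrow> 'a \<Rightarrow> bool) \<Rightarrow> 'a set \<Rightarrow> 'a set" where
  "charF Args Att E = {a\<in>Args. defends Args Att E a}"

lemma mono_charF: "mono (charF Args Att)"
  unfolding mono_def charF_def defends_def by blast

lemma lfp_complete: "complete_ext Args Att (lfp (charF Args Att))"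
proof -
  let ?F = "charF Args Att"
  let ?G = "lfp ?F"
  have G: "?G = ?F ?G" using lfp_unfold[OF mono_charF] .
  define U where "U = {a\<in>?G. \<forall>b\<in>?G. \<not> Att b a \<and> \<not> Att a b}"
  have "?F U \<subseteq> U"
  proof
    fix a assume a: "a \<in> ?F U"
    have UG: "U \<subseteq> ?G" unfolding U_def by blast
    have aG: "a \<in> ?G" using a monoD[OF mono_charF UG] G by blast
    have aA: "a \<in> Args" "defends Args Att U a" using a unfolding charF_def by auto
    have "\<forall>b\<in>?G. \<not> Att b a \<and> \<not> Att a b"
    proof (intro ballI conjI notI)
      fix b assume b: "b \<in> ?G" "Att b a"
      have "b \<in> Args" using b G unfolding charF_def by blast
      then obtain c where "c \<in> U" "Att c b" using aA b unfolding defends_def by blast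
      then show False using b unfolding U_def by blast
    next
      fix b assume b: "b \<in> ?G" "Att a b"
      have "defends Args Att ?G b" using b G unfolding charF_def by blast
      then obtain c where c: "c \<in> ?G" "Att c a" using aA b unfolding defends_def by blast
      have "c \<in> Args" using c G unfolding charF_def by blast
      then obtain d where "d \<in> U" "Att d c" using aA c unfolding defends_def by blast
      then show False using c unfolding U_def by blast
    qed
    then show "a \<in> U" using aG unfolding U_def by blast
  qed
  then have "?G \<subseteq> U" by (rule lfp_lowerbound)
  then have cf: "conflict_free Att ?G" unfolding U_def conflict_free_def by blast
  show ?thesis unfolding complete_ext_def
    using cf G unfolding charF_def by blast
qed

lemma complete_fix: "complete_ext Args Att E \<Longrightarrow> charF Args Att E = E"
  unfolding complete_ext_def charF_def by blast

lemma grounded_lfp: "grounded Args Att = lfp (charF Args Att)"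
  unfolding grounded_def
proof (rule the_equality)
  show "complete_ext Args Att (lfp (charF Args Att)) \<and>
    (\<forall>E'. complete_ext Args Att E' \<and> E' \<subseteq> lfp (charF Args Att) \<longrightarrow> E' = lfp (charF Args Att))"
    using lfp_complete complete_fix lfp_lowerbound
    by (metis equalityI order_refl)
next
  fix E assume "complete_ext Args Att E \<and> (\<forall>E'. complete_ext Args Att E' \<and> E' \<subseteq> E \<longrightarrow> E' = E)"
  moreover have "lfp (charF Args Att) \<subseteq> E"
    using calculation complete_fix lfp_lowerbound by (metis order_refl)
  ultimately show "E = lfp (charF Args Att)" using lfp_complete by blast
qed

lemma grounded_complete: "complete_ext Args Att (grounded Args Att)"
  using grounded_lfp lfp_complete by metis

lemma grounded_least: "charF Args Att X \<subseteq> X \<Longrightarrow> grounded Args Att \<subseteq> X"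
  using grounded_lfp lfp_lowerbound by metis

lemma deriv_plus_finite: "deriv_plus deriv \<phi> \<Gamma> \<gamma> \<Longrightarrow> finite \<Gamma>"
  by (induction rule: deriv_plus.induct) auto

theorem theorem2:
  fixes deriv :: "'f set \<Rightarrow> 'f \<Rightarrow> bool" and contr :: "'f \<Rightarrow> 'f set" and hat :: "'f set \<Rightarrow> 'f set"
    and S :: "'f set" and \<phi> \<psi> :: 'f
  assumes "pointed deriv contr hat"
    and "grd_cons deriv contr hat S \<phi>"
  shows "(grd_cons (deriv_plus deriv \<phi>) contr hat S \<psi> \<longleftrightarrow> grd_cons deriv contr hat S \<psi>)
       \<and> Grd deriv contr hat S = Grd (deriv_plus deriv \<phi>) contr hat S \<inter> Arg deriv S"
proof -
  let ?Att = "attacks contr hat"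
  let ?A = "Arg deriv S"
  let ?Ap = "Arg (deriv_plus deriv \<phi>) S"
  let ?G = "grounded ?A ?Att"
  let ?Gp = "grounded ?Ap ?Att"
  have pt: "setting deriv contr hat \<and>
     (\<forall>\<Gamma> \<Delta>. finite \<Gamma> \<longrightarrow> finite \<Delta> \<longrightarrow> hat (\<Gamma> \<union> \<Delta>) = hat \<Gamma> \<union> hat \<Delta>) \<and>
     (\<forall>\<phi> \<Gamma> \<Delta> \<gamma>. finite \<Gamma> \<longrightarrow> finite \<Delta> \<longrightarrow> deriv \<Gamma> \<phi> \<longrightarrow> deriv_plus deriv \<phi> \<Delta> \<gamma>
        \<longrightarrow> deriv (\<Gamma> \<union> \<Delta>) \<gamma>)"
    using assms(1) unfolding pointed_def .
  have hatU: "\<And>\<Gamma> \<Delta>. finite \<Gamma> \<Longrightarrow> finite \<Delta> \<Longrightarrow> hat (\<Gamma> \<union> \<Delta>) = hat \<Gamma> \<union> hat \<Delta>"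
    using conjunct1[OF conjunct2[OF pt]] by blast
  have cut: "\<And>\<Gamma> \<Delta> \<gamma>. finite \<Gamma> \<Longrightarrow> finite \<Delta> \<Longrightarrow> deriv \<Gamma> \<phi> \<Longrightarrow> deriv_plus deriv \<phi> \<Delta> \<gamma>
        \<Longrightarrow> deriv (\<Gamma> \<union> \<Delta>) \<gamma>"
    using conjunct2[OF conjunct2[OF pt]] by blast
  obtain P where P: "(P, \<phi>) \<in> ?G" using assms(2) unfolding grd_cons_def Grd_def by blast
  have cG: "complete_ext ?A ?Att ?G" by (rule grounded_complete)
  have cGp: "complete_ext ?Ap ?Att ?Gp" by (rule grounded_complete)
  have GA: "?G \<subseteq> ?A" using cG unfolding complete_ext_def by (rule conjunct1)
  have PA: "(P, \<phi>) \<in> ?A" using P GA by (rule subsetD[rotated])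
  then have Pf: "finite P" "P \<subseteq> S" "deriv P \<phi>" unfolding Arg_def by auto
  define h where "h = (\<lambda>a::'f set \<times> 'f. (P \<union> fst a, snd a))"
  have AAp: "?A \<subseteq> ?Ap"
  proof
    fix a assume "a \<in> ?A"
    then obtain D g where a: "a = (D, g)" "finite D" "D \<subseteq> S" "deriv D g" unfolding Arg_def by auto
    then have "deriv_plus deriv \<phi> D g" by (simp add: deriv_plus.base)
    then show "a \<in> ?Ap" using a unfolding Arg_def by simp
  qed
  have hA: "h a \<in> ?A" if "a \<in> ?Ap" for a
  proof -
    obtain D g where a: "a = (D, g)" by (cases a)
    have D: "finite D" "D \<subseteq> S" "deriv_plus deriv \<phi> D g" using that unfolding a Arg_def by auto
    have "deriv (P \<union> D) g" using cut[OF Pf(1) D(1) Pf(3) D(3)] .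
    then show ?thesis using D Pf unfolding a h_def Arg_def by simp
  qed
  have hatt: "?Att b (h a) \<longleftrightarrow> ?Att b a \<or> ?Att b (P, \<phi>)" if "a \<in> ?Ap" for a b
  proof -
    obtain D g where a: "a = (D, g)" by (cases a)
    have D: "finite D" using that unfolding a Arg_def by auto
    have "hat (P \<union> D) = hat P \<union> hat D" using hatU[OF Pf(1) D] .
    then show ?thesis unfolding a h_def attacks_def by auto
  qed
  have attsnd: "?Att (h c) b \<longleftrightarrow> ?Att c b" for c b
    unfolding h_def attacks_def by simp
  have GGp: "?G \<subseteq> ?Gp"
  proof -
    have "charF ?A ?Att (?G \<inter> ?Gp) \<subseteq> ?G \<inter> ?Gp"
    proof
      fix a assume a: "a \<in> charF ?A ?Att (?G \<inter> ?Gp)"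
      have aG: "a \<in> ?G" using a monoD[OF mono_charF, of "?G \<inter> ?Gp" ?G] complete_fix[OF cG] by blast
      have aA: "a \<in> ?A" "defends ?A ?Att (?G \<inter> ?Gp) a" using a unfolding charF_def by auto
      have "defends ?Ap ?Att ?Gp a" unfolding defends_def
      proof (intro ballI impI)
        fix b assume b: "b \<in> ?Ap" "?Att b a"
        have "?Att (h b) a" using b attsnd by blast
        then obtain c where c: "c \<in> ?G \<inter> ?Gp" "?Att c (h b)" using aA hA[OF b(1)] unfolding defends_def by blast
        have "\<not> ?Att c (P, \<phi>)" using c P cG unfolding complete_ext_def conflict_free_def by blast
        then show "\<exists>c\<in>?Gp. ?Att c b" using c hatt[OF b(1)] by blast
      qed
      then have "a \<in> ?Gp" using aA AAp cGp unfolding complete_ext_def by blast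
      then show "a \<in> ?G \<inter> ?Gp" using aG by blast
    qed
    then show ?thesis using grounded_least by blast
  qed
  have hG: "h a \<in> ?G" if "a \<in> ?Gp" for a
  proof -
    have "charF ?Ap ?Att {a \<in> ?Ap. h a \<in> ?G} \<subseteq> {a \<in> ?Ap. h a \<in> ?G}"
    proof
      fix a assume a: "a \<in> charF ?Ap ?Att {a \<in> ?Ap. h a \<in> ?G}"
      have aA: "a \<in> ?Ap" "defends ?Ap ?Att {a \<in> ?Ap. h a \<in> ?G} a" using a unfolding charF_def by auto
      have "defends ?A ?Att ?G (h a)" unfolding defends_def
      proof (intro ballI impI)
        fix b assume b: "b \<in> ?A" "?Att b (h a)"
        then consider "?Att b a" | "?Att b (P, \<phi>)" using hatt[OF aA(1)] by blast
        then show "\<exists>c\<in>?G. ?Att c b"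
        proof cases
          case 1
          then obtain c where "c \<in> {a \<in> ?Ap. h a \<in> ?G}" "?Att c b"
            using aA b AAp unfolding defends_def by blast
          then show ?thesis using attsnd by blast
        next
          case 2
          then show ?thesis using P cG b unfolding complete_ext_def defends_def by blast
        qed
      qed
      then have "h a \<in> ?G" using hA[OF aA(1)] cG unfolding complete_ext_def by blast
      then show "a \<in> {a \<in> ?Ap. h a \<in> ?G}" using aA by blast
    qed
    then show ?thesis using grounded_least[of ?Ap ?Att] that by blast
  qed
  have GpG: "?Gp \<inter> ?A \<subseteq> ?G"
  proof
    fix a assume a: "a \<in> ?Gp \<inter> ?A"
    then have ha: "h a \<in> ?G" using hG by blast
    have "defends ?A ?Att ?G a" unfolding defends_def
    proof (intro ballI impI)
      fix b assume b: "b \<in> ?A" "?Att b a"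
      then have "?Att b (h a)" using hatt a AAp by blast
      then show "\<exists>c\<in>?G. ?Att c b" using ha b cG unfolding complete_ext_def defends_def by blast
    qed
    then show "a \<in> ?G" using a cG unfolding complete_ext_def by blast
  qed
  have part2: "Grd deriv contr hat S = Grd (deriv_plus deriv \<phi>) contr hat S \<inter> Arg deriv S"
  proof -
    have "?G \<subseteq> ?A" using cG unfolding complete_ext_def by (rule conjunct1)
    then show ?thesis unfolding Grd_def using GGp GpG by blast
  qed
  have part1: "grd_cons (deriv_plus deriv \<phi>) contr hat S \<psi> \<longleftrightarrow> grd_cons deriv contr hat S \<psi>"
  proof
    assume "grd_cons (deriv_plus deriv \<phi>) contr hat S \<psi>"
    then obtain D where "(D, \<psi>) \<in> ?Gp" unfolding grd_cons_def Grd_def by blast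
    then have "h (D, \<psi>) \<in> ?G" by (rule hG)
    then show "grd_cons deriv contr hat S \<psi>" unfolding grd_cons_def Grd_def h_def by auto
  next
    assume "grd_cons deriv contr hat S \<psi>"
    then show "grd_cons (deriv_plus deriv \<phi>) contr hat S \<psi>"
      using GGp unfolding grd_cons_def Grd_def by blast
  qed
  show ?thesis using part1 part2 by blast
qed

end
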